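(* Let $p$ be a rational prime with $p\equiv1\pmod 8$. Then there exist positive integers $a,b$ with $p=(a+b\sqrt2)(a-b\sqrt2)$, and for such $a,b$ there exists $\alpha\in\mathbb{Z}[\zeta_8]$ such that $$a+b\sqrt2=\sigma_1(\alpha)\sigma_7(\alpha),\qquad a-b\sqrt2=\sigma_3(\alpha)\sigma_5(\alpha),$$ and $$\|\Sigma_{\mathbb{Q}(\zeta_8)}(\alpha)\|^2=2\sigma_1(\alpha)\sigma_7(\alpha)+2\sigma_3(\alpha)\sigma_5(\alpha)=4a.$$
   Context: $\zeta_8=e^{2\pi i/8}$, $\sqrt2=\zeta_8+\zeta_8^{7}$. For $i\in\{1,3,5,7\}$, $\sigma_i$ is the automorphism of $\mathbb{Q}(\zeta_8)$ with $\sigma_i(\zeta_8)=\zeta_8^i$. The canonical embedding norm is $\|\Sigma_{\mathbb{Q}(\zeta_8)}(x)\|^2=\sum_{i\in\{1,3,5,7\}}|\sigma_i(x)|^2$. *)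

theory Defs
  imports Complex_Main "HOL-Computational_Algebra.Primes"
begin

definition zeta8 :: complex where
  "zeta8 = exp (2 * of_real pi * \<i> / 8)"

text \<open>An element of Z[zeta8] is represented by its integer coordinates
  c 0, ..., c 3 in the integral basis 1, zeta8, zeta8^2, zeta8^3.\<close>
definition zelt :: "(nat \<Rightarrow> int) \<Rightarrow> complex" where
  "zelt c = (\<Sum>k<4. of_int (c k) * zeta8 ^ k)"

text \<open>sigma_i (alpha) for alpha = zelt c: the automorphism zeta8 -> zeta8^i.\<close>
definition sigma :: "nat \<Rightarrow> (nat \<Rightarrow> int) \<Rightarrow> complex" where
  "sigma i c = (\<Sum>k<4. of_int (c k) * zeta8 ^ (i * k))"

definition emb_norm2 :: "(nat \<Rightarrow> int) \<Rightarrow> real" where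
  "emb_norm2 c = (\<Sum>i\<in>{1,3,5,7::nat}. (cmod (sigma i c))\<^sup>2)"

end

theory Submission
  imports Defs "HOL-Number_Theory.Residue_Primitive_Roots"
begin

datatype z8 = Z (c0: int) (c1: int) (c2: int) (c3: int)

definition zmul :: "z8 \<Rightarrow> z8 \<Rightarrow> z8" where
 "zmul x y = Z (c0 x * c0 y - c1 x * c3 y - c2 x * c2 y - c3 x * c1 y)
               (c0 x * c1 y + c1 x * c0 y - c2 x * c3 y - c3 x * c2 y)
               (c0 x * c2 y + c1 x * c1 y + c2 x * c0 y - c3 x * c3 y)
               (c0 x * c3 y + c1 x * c2 y + c2 x * c1 y + c3 x * c0 y)"
definition zsub :: "z8 \<Rightarrow> z8 \<Rightarrow> z8" where
 "zsub x y = Z (c0 x - c0 y) (c1 x - c1 y) (c2 x - c2 y) (c3 x - c3 y)"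
definition zQ :: "z8 \<Rightarrow> int" where
 "zQ x = (c0 x)^2 + (c1 x)^2 + (c2 x)^2 + (c3 x)^2"
definition zB :: "z8 \<Rightarrow> int" where
 "zB x = c0 x * c1 x + c1 x * c2 x + c2 x * c3 x - c3 x * c0 x"
definition zN :: "z8 \<Rightarrow> int" where
 "zN x = (zQ x)^2 - 2 * (zB x)^2"
definition s3 :: "z8 \<Rightarrow> z8" where "s3 x = Z (c0 x) (c3 x) (- c2 x) (c1 x)"
definition s5 :: "z8 \<Rightarrow> z8" where "s5 x = Z (c0 x) (- c1 x) (c2 x) (- c3 x)"
definition s7 :: "z8 \<Rightarrow> z8" where "s7 x = Z (c0 x) (- c3 x) (- c2 x) (- c1 x)"
definition adj :: "z8 \<Rightarrow> z8" where "adj x = zmul (s3 x) (zmul (s5 x) (s7 x))"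
definition ev :: "int \<Rightarrow> z8 \<Rightarrow> int" where
 "ev r x = c0 x + c1 x * r + c2 x * r^2 + c3 x * r^3"

lemmas zdefs = zmul_def zsub_def zQ_def zB_def zN_def s3_def s5_def s7_def adj_def ev_def

lemma zQ_mul: "zQ (zmul x y) = zQ x * zQ y + 2 * zB x * zB y"
  unfolding zdefs by simp Groebner_Basis.algebra

lemma zB_mul: "zB (zmul x y) = zQ x * zB y + zB x * zQ y"
  unfolding zdefs by simp Groebner_Basis.algebra

lemma zN_mul: "zN (zmul x y) = zN x * zN y"
  unfolding zN_def zQ_mul zB_mul by Groebner_Basis.algebra

lemma zmul_assoc: "zmul (zmul x y) w = zmul x (zmul y w)"
  unfolding zdefs by simp Groebner_Basis.algebra

lemma zmul_adj: "zmul x (adj x) = Z (zN x) 0 0 0"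
  unfolding zdefs by simp Groebner_Basis.algebra

lemma zsub_mul: "zmul (zsub x y) w = zsub (zmul x w) (zmul y w)"
  unfolding zdefs by simp Groebner_Basis.algebra

lemma ev_mul: "ev r (zmul x y) = ev r x * ev r y - (r^4+1) *
   ((c1 x * c3 y + c2 x * c2 y + c3 x * c1 y) + (c2 x * c3 y + c3 x * c2 y) * r + c3 x * c3 y * r^2)"
  unfolding zdefs by simp Groebner_Basis.algebra

lemma ev_sub: "ev r (zsub x y) = ev r x - ev r y"
  unfolding zdefs by simp Groebner_Basis.algebra


lemma zN_nonneg: "zN x \<ge> 0"
proof -
  define P where "P = (c0 x)^2 + (c2 x)^2"
  define R where "R = (c1 x)^2 + (c3 x)^2"
  have B: "zB x = c0 x * (c1 x - c3 x) + c2 x * (c1 x + c3 x)" unfolding zB_def by Groebner_Basis.algebra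
  have cs: "(c0 x * (c1 x - c3 x) + c2 x * (c1 x + c3 x))^2 \<le> P * ((c1 x - c3 x)^2 + (c1 x + c3 x)^2)"
  proof -
    have "(c0 x * (c1 x - c3 x) + c2 x * (c1 x + c3 x))^2 + (c0 x * (c1 x + c3 x) - c2 x * (c1 x - c3 x))^2
       = ((c0 x)^2 + (c2 x)^2) * ((c1 x - c3 x)^2 + (c1 x + c3 x)^2)" by Groebner_Basis.algebra
    thus ?thesis using zero_le_power2[of "c0 x * (c1 x + c3 x) - c2 x * (c1 x - c3 x)"] unfolding P_def by linarith
  qed
  have "(c1 x - c3 x)^2 + (c1 x + c3 x)^2 = 2 * R" unfolding R_def by Groebner_Basis.algebra
  hence "2 * (zB x)^2 \<le> 4 * P * R" using cs B by simp
  moreover have "4 * P * R \<le> (P + R)^2"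
    using zero_le_power2[of "P - R"] by (simp add: power2_eq_square algebra_simps)
  moreover have "zQ x = P + R" unfolding zQ_def P_def R_def by simp
  ultimately show ?thesis unfolding zN_def by simp
qed

lemma sq2_descent: "(q::int)^2 = 2 * b^2 \<Longrightarrow> b = 0"
proof (induction "nat \<bar>b\<bar>" arbitrary: q b rule: less_induct)
  case less
  show ?case
  proof (rule ccontr)
    assume b0: "b \<noteq> 0"
    have "even (q^2)" using less.prems by simp
    hence "even q" by simp
    then obtain q' where q': "q = 2 * q'" by blast
    hence "b^2 = 2 * q'^2" using less.prems by (simp add: power2_eq_square)
    hence "even (b^2)" by simp
    hence "even b" by simp
    then obtain b' where b': "b = 2 * b'" by blast
    hence "q'^2 = 2 * b'^2" using \<open>b^2 = 2 * q'^2\<close> by (simp add: power2_eq_square)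
    moreover have "nat \<bar>b'\<bar> < nat \<bar>b\<bar>" using b' b0 by simp
    ultimately have "b' = 0" using less.hyps by blast
    thus False using b' b0 by simp
  qed
qed

lemma zN_pos: "x \<noteq> Z 0 0 0 0 \<Longrightarrow> zN x > 0"
proof (rule ccontr)
  assume nz: "x \<noteq> Z 0 0 0 0" and "\<not> zN x > 0"
  hence "zN x = 0" using zN_nonneg[of x] by simp
  hence "(zQ x)^2 = 2 * (zB x)^2" unfolding zN_def by simp
  hence "zB x = 0" by (rule sq2_descent)
  hence "zQ x = 0" using \<open>(zQ x)^2 = 2 * (zB x)^2\<close> by simp
  hence "c0 x = 0 \<and> c1 x = 0 \<and> c2 x = 0 \<and> c3 x = 0" unfolding zQ_def
    using zero_le_power2[of "c0 x"] zero_le_power2[of "c1 x"] zero_le_power2[of "c2 x"] zero_le_power2[of "c3 x"]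
    by (smt (verit) power_eq_0_iff)
  thus False using nz by (cases x) simp
qed

lemma small_bound:
  assumes n: "n > 0" and t: "\<bar>2 * c0 t\<bar> \<le> n" "\<bar>2 * c1 t\<bar> \<le> n" "\<bar>2 * c2 t\<bar> \<le> n" "\<bar>2 * c3 t\<bar> \<le> n"
  shows "zN t < n^4"
proof -
  have sq: "v^2 \<le> n^2" if "\<bar>v\<bar> \<le> n" for v
    using that by (metis abs_le_square_iff abs_of_pos n)
  have h: "4 * zQ t \<le> 4 * n^2" using sq[OF t(1)] sq[OF t(2)] sq[OF t(3)] sq[OF t(4)]
    unfolding zQ_def by (simp add: power_mult_distrib)
  show ?thesis
  proof (cases "zQ t < n^2")
    case True
    have "zQ t \<ge> 0" unfolding zQ_def by simp
    hence "(zQ t)^2 < (n^2)^2" using True by (intro power_strict_mono) auto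
    moreover have "(n^2)^2 = n^4" by simp
    ultimately show ?thesis unfolding zN_def by (smt (verit) zero_le_power2)
  next
    case False
    hence Q: "zQ t = n^2" using h by simp
    define u0 where "u0 = 2 * c0 t"
    define u1 where "u1 = 2 * c1 t"
    define u2 where "u2 = 2 * c2 t"
    define u3 where "u3 = 2 * c3 t"
    have sumu: "u0^2 + u1^2 + u2^2 + u3^2 = 4 * n^2" using Q unfolding zQ_def u0_def u1_def u2_def u3_def
      by (simp add: power_mult_distrib)
    have b: "u0^2 \<le> n^2" "u1^2 \<le> n^2" "u2^2 \<le> n^2" "u3^2 \<le> n^2"
      unfolding u0_def u1_def u2_def u3_def using sq[OF t(1)] sq[OF t(2)] sq[OF t(3)] sq[OF t(4)] by auto
    have "u0^2 = n^2" "u1^2 = n^2" "u2^2 = n^2" "u3^2 = n^2" using sumu b by linarith+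
    hence "u0 = n \<or> u0 = -n" "u1 = n \<or> u1 = -n" "u2 = n \<or> u2 = -n" "u3 = n \<or> u3 = -n"
      by (simp_all add: power2_eq_iff)
    hence "u0*u1 + u1*u2 + u2*u3 - u3*u0 \<noteq> 0" using n
      by (elim disjE) (simp_all add: algebra_simps)
    moreover have "4 * zB t = u0*u1 + u1*u2 + u2*u3 - u3*u0" unfolding zB_def u0_def u1_def u2_def u3_def
      by Groebner_Basis.algebra
    ultimately have "zB t \<noteq> 0" by auto
    hence "(zB t)^2 > 0" by simp
    thus ?thesis unfolding zN_def Q by (simp add: power_mult[symmetric])
  qed
qed


lemma zN_const: "zN (Z n 0 0 0) = n^4"
  unfolding zN_def zQ_def zB_def by simp

lemma round_bound:
  assumes n: "(n::int) > 0"
  shows "\<bar>2 * (v - n * ((2 * v + n) div (2 * n)))\<bar> \<le> n"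
proof -
  have "2 * v + n = 2 * n * ((2 * v + n) div (2 * n)) + (2 * v + n) mod (2 * n)" by simp
  moreover have "0 \<le> (2 * v + n) mod (2 * n)" "(2 * v + n) mod (2 * n) < 2 * n" using n by simp_all
  ultimately show ?thesis by (simp add: algebra_simps abs_le_iff)
qed

lemma zdiv:
  assumes a: "a \<noteq> Z 0 0 0 0"
  shows "\<exists>k. zN (zsub b (zmul k a)) < zN a"
proof -
  define n where "n = zN a"
  have n: "n > 0" using zN_pos[OF a] n_def by simp
  define y where "y = zmul b (adj a)"
  define f where "f = (\<lambda>v. (2 * v + n) div (2 * n))"
  define k where "k = Z (f (c0 y)) (f (c1 y)) (f (c2 y)) (f (c3 y))"
  define t where "t = zsub y (Z (n * f (c0 y)) (n * f (c1 y)) (n * f (c2 y)) (n * f (c3 y)))"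
  have kn: "zmul k (Z n 0 0 0) = Z (n * f (c0 y)) (n * f (c1 y)) (n * f (c2 y)) (n * f (c3 y))"
    unfolding k_def zmul_def by (simp add: algebra_simps)
  have "zmul (zsub b (zmul k a)) (adj a) = t"
    unfolding zsub_mul zmul_assoc zmul_adj t_def y_def n_def[symmetric] kn ..
  hence e1: "zN (zsub b (zmul k a)) * zN (adj a) = zN t" by (simp add: zN_mul[symmetric])
  have "zN a * zN (adj a) = n^4" using zN_mul[of a "adj a"] unfolding zmul_adj zN_const n_def by simp
  hence "n * zN (adj a) = n * n^3" unfolding n_def by (simp add: eval_nat_numeral)
  hence e2: "zN (adj a) = n^3" using n by simp
  have "zN t < n^4"
    using small_bound[OF n] round_bound[OF n] unfolding t_def zsub_def f_def by simp
  hence "zN (zsub b (zmul k a)) * n^3 < n * n^3" using e1 e2 by (simp add: eval_nat_numeral)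
  hence "zN (zsub b (zmul k a)) < n" using n by (simp add: mult_less_cancel_right)
  thus ?thesis unfolding n_def by blast
qed


lemma exists_r0:
  fixes p :: nat
  assumes p: "prime p" and p8: "p mod 8 = 1"
  shows "\<exists>r::int. int p dvd r^4 + 1"
proof -
  obtain g where g: "residue_primroot p g" using prime_primitive_root_exists[OF prime_gt_1_nat[OF p] p] by blast
  have og: "ord p g = p - 1" using g p by (simp add: residue_primroot_def totient_prime)
  define m where "m = (p - 1) div 8"
  have pm: "p - 1 = 8 * m" using p8 unfolding m_def by presburger
  have m0: "m > 0" using pm prime_gt_1_nat[OF p] by simp
  have c1: "[g^(8*m) = 1] (mod p)" using ord_works[of g p] og pm by simp
  have c2: "\<not> [g^(4*m) = 1] (mod p)" using ord_minimal[of "4*m" p g] og pm m0 by simp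
  have d1: "int p dvd (int g ^ (4*m))^2 - 1"
    using c1 cong_int_iff[of "g^(8*m)" 1 p] by (simp add: cong_iff_dvd_diff power_mult[symmetric] mult.commute)
  have d2: "\<not> int p dvd int g ^ (4*m) - 1"
    using c2 cong_int_iff[of "g^(4*m)" 1 p] by (simp add: cong_iff_dvd_diff)
  have "(int g ^ (4*m))^2 - 1 = (int g ^ (4*m) - 1) * (int g ^ (4*m) + 1)" by Groebner_Basis.algebra
  hence "int p dvd int g ^ (4*m) + 1" using d1 d2 p by (simp add: prime_dvd_mult_iff prime_nat_int_transfer)
  hence "int p dvd (int g ^ m)^4 + 1" by (simp add: power_mult[symmetric] mult.commute)
  thus ?thesis by blast
qed

lemma exists_r:
  fixes p :: nat
  assumes p: "prime p" and p8: "p mod 8 = 1"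
  shows "\<exists>r::int. int p dvd r^4 + 1 \<and> \<not> (int p)^2 dvd r^4 + 1"
proof -
  obtain r where r: "int p dvd r^4 + 1" using exists_r0[OF assms] by blast
  show ?thesis
  proof (cases "(int p)^2 dvd r^4 + 1")
    case False thus ?thesis using r by blast
  next
    case True
    define q where "q = int p"
    have e: "(r + q)^4 + 1 = (r^4 + 1) + 4 * r^3 * q + q^2 * (6 * r^2 + 4 * r * q + q^2)" by Groebner_Basis.algebra
    have "q dvd (r + q)^4 + 1" using r unfolding q_def[symmetric] e by simp
    moreover have "\<not> q^2 dvd (r + q)^4 + 1"
    proof
      assume "q^2 dvd (r + q)^4 + 1"
      hence h1: "q^2 dvd (r^4 + 1) + (4 * r^3 * q + q^2 * (6 * r^2 + 4 * r * q + q^2))"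
        unfolding q_def[symmetric] e by (simp add: add.assoc)
      have h2: "q^2 dvd r^4 + 1" using True unfolding q_def .
      have "q^2 dvd 4 * r^3 * q + q^2 * (6 * r^2 + 4 * r * q + q^2)"
        using h1 by (simp only: dvd_add_right_iff[OF h2])
      hence "q^2 dvd 4 * r^3 * q" by (simp only: dvd_add_left_iff[OF dvd_triv_left])
      hence "q * q dvd (4 * r^3) * q" by (simp add: power2_eq_square mult.commute)
      moreover have "q \<noteq> 0" using p unfolding q_def by (simp add: prime_gt_0_nat)
      ultimately have "q dvd 4 * r^3" using dvd_mult_cancel_right by blast
      moreover have pq: "prime q" using p unfolding q_def by (simp add: prime_nat_int_transfer)
      moreover have "\<not> q dvd 4"
      proof
        assume "q dvd 4"
        hence "q \<le> 4" by (simp add: zdvd_imp_le)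
        hence "p \<le> 4" unfolding q_def by simp
        moreover have "p \<ge> 2" using prime_ge_2_nat[OF p] .
        ultimately show False using p8 by presburger
      qed
      ultimately have "q dvd r^3" using prime_dvd_mult_iff[OF pq, of 4 "r^3"] by blast
      hence "q dvd r" using prime_dvd_power[OF pq] by blast
      hence "q dvd r^4" by (rule dvd_trans[OF _ dvd_power[of 4 r]]) auto
      moreover have "q dvd r^4 + 1" using r unfolding q_def .
      ultimately have "q dvd (r^4 + 1) - r^4" by (rule dvd_diff[rotated])
      hence "q dvd 1" by simp
      thus False using pq not_prime_unit by blast
    qed
    ultimately show ?thesis unfolding q_def by blast
  qed
qed


lemma zsub_eq0: "zsub b c = Z 0 0 0 0 \<Longrightarrow> b = c"
  by (cases b; cases c) (simp add: zsub_def)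

lemma exists_norm_p:
  fixes p :: nat
  assumes p: "prime p" and p8: "p mod 8 = 1"
  shows "\<exists>x. zN x = int p"
proof -
  obtain r where hr1: "int p dvd r^4 + 1" and hr2: "\<not> (int p)^2 dvd r^4 + 1"
    using exists_r[OF assms] by blast
  define P where "P = int p"
  have P0: "P > 0" using p unfolding P_def by (simp add: prime_gt_0_nat)
  have evm: "P dvd ev r (zmul k a)" if "P dvd ev r a" for k a
    unfolding ev_mul using that hr1 unfolding P_def by simp
  have evm2: "P dvd ev r (zmul a k)" if "P dvd ev r a" for k a
    unfolding ev_mul using that hr1 unfolding P_def by simp
  define S where "S = (\<lambda>x. P dvd ev r x \<and> x \<noteq> Z 0 0 0 0)"
  have "S (Z P 0 0 0)" unfolding S_def ev_def using P0 by simp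
  then obtain a where Sa: "S a" and amin: "\<And>y. S y \<Longrightarrow> nat (zN a) \<le> nat (zN y)"
    using ex_has_least_nat[of S "Z P 0 0 0" "\<lambda>x. nat (zN x)"] by blast
  have a0: "a \<noteq> Z 0 0 0 0" and Ia: "P dvd ev r a" using Sa unfolding S_def by auto
  have gen: "\<exists>k. b = zmul k a" if Ib: "P dvd ev r b" for b
  proof -
    obtain k where k: "zN (zsub b (zmul k a)) < zN a" using zdiv[OF a0] by blast
    have "P dvd ev r (zsub b (zmul k a))" unfolding ev_sub using Ib evm[OF Ia, of k] by simp
    moreover have "\<not> S (zsub b (zmul k a))"
    proof
      assume "S (zsub b (zmul k a))"
      hence "nat (zN a) \<le> nat (zN (zsub b (zmul k a)))" by (rule amin)
      thus False using k zN_nonneg[of "zsub b (zmul k a)"] by simp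
    qed
    ultimately have "zsub b (zmul k a) = Z 0 0 0 0" unfolding S_def by blast
    thus ?thesis using zsub_eq0 by blast
  qed
  obtain k1 where k1: "Z P 0 0 0 = zmul k1 a" using gen[of "Z P 0 0 0"] unfolding ev_def by auto
  obtain k2 where k2: "Z (-r) 1 0 0 = zmul k2 a" using gen[of "Z (-r) 1 0 0"] unfolding ev_def by auto
  have d1: "zN a dvd P^4" using arg_cong[OF k1, of zN] unfolding zN_mul zN_const by simp
  have "zN (Z (-r) 1 0 0) = r^4 + 1" unfolding zN_def zQ_def zB_def by simp Groebner_Basis.algebra
  hence "zN k2 * zN a = r^4 + 1" using arg_cong[OF k2, of zN] unfolding zN_mul by simp
  hence d2: "zN a dvd r^4 + 1" by (metis dvd_triv_right)
  have "ev r (zmul a (adj a)) = zN a" unfolding zmul_adj ev_def by simp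
  hence d3: "P dvd zN a" using evm2[OF Ia, of "adj a"] by simp
  have npos: "zN a > 0" using zN_pos[OF a0] .
  define n where "n = nat (zN a)"
  have zn: "zN a = int n" unfolding n_def using npos by simp
  have "int n dvd int (p^4)" using d1 unfolding zn P_def by simp
  hence "n dvd p^4" by (simp only: int_dvd_int_iff)
  then obtain i where i: "i \<le> 4" "n = p^i" using divides_primepow_nat[OF p] by blast
  have "i \<noteq> 0"
  proof
    assume "i = 0"
    hence "P dvd 1" using d3 zn i by simp
    hence "P \<le> 1" by (rule zdvd_imp_le) simp
    thus False using prime_ge_2_nat[OF p] unfolding P_def by simp
  qed
  moreover have "\<not> i \<ge> 2"
  proof
    assume "i \<ge> 2"
    hence "p^2 dvd n" using i by (simp add: le_imp_power_dvd)
    hence "int (p^2) dvd int n" by (simp only: int_dvd_int_iff)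
    hence "int p ^ 2 dvd zN a" unfolding zn by simp
    thus False using d2 hr2 dvd_trans by blast
  qed
  ultimately have "i = 1" by simp
  thus ?thesis using zn i by auto
qed


lemma unit_square:
  "(c::int) > 0 \<Longrightarrow> c^2 - 2 * d^2 = 1 \<Longrightarrow> \<exists>e f. c = e^2 + 2 * f^2 \<and> d = 2 * e * f"
proof (induction "nat c" arbitrary: c d rule: less_induct)
  case less
  show ?case
  proof (cases "d = 0")
    case True
    hence "c^2 = 1" using less.prems by simp
    hence "c = 1" using less.prems(1) by (simp add: power2_eq_1_iff)
    thus ?thesis using True by (intro exI[of _ 1] exI[of _ 0]) simp
  next
    case False
    define d0 where "d0 = \<bar>d\<bar>"
    have d1: "d0 \<ge> 1" using False unfolding d0_def by simp
    have dd: "d^2 = d0^2" unfolding d0_def by simp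
    have csq: "c^2 = 1 + 2 * d0^2" using less.prems dd by simp
    have pos: "3 * c - 4 * d0 > 0"
    proof (rule ccontr)
      assume "\<not> 3 * c - 4 * d0 > 0"
      hence h: "3 * c \<le> 4 * d0" by simp
      hence "(3 * c) * (3 * c) \<le> (4 * d0) * (4 * d0)" using mult_mono[OF h h] less.prems(1) by simp
      hence "9 * c^2 \<le> 16 * d0^2" by (simp add: power2_eq_square algebra_simps)
      thus False using csq zero_le_power2[of d0] by linarith
    qed
    have lt: "3 * c - 4 * d0 < c"
    proof (rule ccontr)
      assume "\<not> 3 * c - 4 * d0 < c"
      hence h: "2 * d0 \<le> c" by simp
      hence "(2 * d0) * (2 * d0) \<le> c * c" using mult_mono[OF h h] d1 by simp
      hence "4 * d0^2 \<le> c^2" by (simp add: power2_eq_square algebra_simps)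
      moreover have "d0^2 \<ge> 1" using d1 by (simp add: one_le_power)
      ultimately show False using csq by linarith
    qed
    have eq: "(3 * c - 4 * d0)^2 - 2 * (3 * d0 - 2 * c)^2 = 1" using csq by Groebner_Basis.algebra
    have "nat (3 * c - 4 * d0) < nat c" using pos lt by simp
    then obtain e f where ef: "3 * c - 4 * d0 = e^2 + 2 * f^2" "3 * d0 - 2 * c = 2 * e * f"
      using less.hyps[OF _ pos eq] by blast
    have "c = 3 * (3 * c - 4 * d0) + 4 * (3 * d0 - 2 * c)" "d0 = 2 * (3 * c - 4 * d0) + 3 * (3 * d0 - 2 * c)" by simp_all
    hence ce: "c = (e + 2 * f)^2 + 2 * (e + f)^2" and de: "d0 = 2 * (e + 2 * f) * (e + f)"
      unfolding ef by (simp_all add: power2_eq_square algebra_simps)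
    show ?thesis
    proof (cases "d \<ge> 0")
      case True
      hence "d = d0" unfolding d0_def by simp
      thus ?thesis using ce de by blast
    next
      case False
      hence "d = - d0" unfolding d0_def by simp
      hence "d = 2 * (e + 2 * f) * (- (e + f))" using de by (simp add: algebra_simps)
      moreover have "c = (e + 2 * f)^2 + 2 * (- (e + f))^2" using ce by (simp only: power2_minus)
      ultimately show ?thesis by blast
    qed
  qed
qed

lemma relate:
  fixes a b A B P :: int
  assumes P: "prime P" "P \<noteq> 2" and ab: "a^2 - 2 * b^2 = P" and AB: "A^2 - 2 * B^2 = P"
    and a0: "a > 0" and A0: "A > 0" and dv: "P dvd a * A - 2 * b * B"
  shows "\<exists>c d. c > 0 \<and> c^2 - 2 * d^2 = 1 \<and> a = c * A + 2 * d * B \<and> b = c * B + d * A"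
proof -
  have P0: "P > 0" using P prime_gt_0_int by blast
  have "(a * A - 2 * b * B)^2 - 2 * (A * b - a * B)^2 = (a^2 - 2 * b^2) * (A^2 - 2 * B^2)"
    by Groebner_Basis.algebra
  hence id: "(a * A - 2 * b * B)^2 - 2 * (A * b - a * B)^2 = P^2" using ab AB by (simp add: power2_eq_square)
  have "P dvd (a * A - 2 * b * B) * (a * A - 2 * b * B) - P * P" using dv by (rule dvd_diff[OF dvd_mult2 dvd_mult2]) simp_all
  hence "P dvd (a * A - 2 * b * B)^2 - P^2" by (simp add: power2_eq_square)
  hence "P dvd 2 * (A * b - a * B)^2" using id by (metis add_diff_cancel_left' diff_add_cancel diff_diff_eq2)
  moreover have "\<not> P dvd 2"
  proof
    assume "P dvd 2"
    hence "P \<le> 2" by (rule zdvd_imp_le) simp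
    moreover have "P \<ge> 2" using P prime_ge_2_int by blast
    ultimately show False using P by simp
  qed
  ultimately have "P dvd (A * b - a * B)^2" using P(1) prime_dvd_mult_iff by blast
  hence "P dvd A * b - a * B" using P(1) prime_dvd_power by blast
  then obtain d where d: "A * b - a * B = P * d" by blast
  obtain c where c: "a * A - 2 * b * B = P * c" using dv by blast
  have "P^2 * (c^2 - 2 * d^2) = P^2 * 1" using id c d by Groebner_Basis.algebra
  hence cd: "c^2 - 2 * d^2 = 1" using P0 by simp
  have "P * (c * A + 2 * d * B) = P * a" using c d AB by Groebner_Basis.algebra
  hence e1: "a = c * A + 2 * d * B" using P0 by simp
  have "P * (c * B + d * A) = P * b" using c d AB by Groebner_Basis.algebra
  hence e2: "b = c * B + d * A" using P0 by simp
  have "c > 0"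
  proof (rule ccontr)
    assume "\<not> c > 0"
    moreover have "c^2 \<ge> 1" using cd zero_le_power2[of d] by linarith
    hence "c \<noteq> 0" by (cases "c = 0") auto
    ultimately have cn: "c < 0" by simp
    have "0 < - c * A" using cn A0 by (simp add: mult_neg_pos)
    have h: "- c * A < 2 * d * B" using e1 a0 by simp
    have "(- c * A) * (- c * A) < (2 * d * B) * (2 * d * B)"
      using mult_strict_mono[OF h h] \<open>0 < - c * A\<close> h by linarith
    moreover have "(- c * A) * (- c * A) = (1 + 2 * d^2) * (P + 2 * B^2)"
      using cd AB by Groebner_Basis.algebra
    moreover have "(2 * d * B) * (2 * d * B) = 4 * (d^2 * B^2)" by Groebner_Basis.algebra
    moreover have "(1 + 2 * d^2) * (P + 2 * B^2) = P + 2 * B^2 + 2 * (d^2 * P) + 4 * (d^2 * B^2)"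
      by Groebner_Basis.algebra
    moreover have "d^2 * P \<ge> 0" using P0 by simp
    moreover have "B^2 \<ge> 0" by simp
    ultimately show False using P0 by linarith
  qed
  thus ?thesis using cd e1 e2 by blast
qed


lemma s3_Q: "zQ (s3 x) = zQ x" unfolding zQ_def s3_def by simp
lemma s3_B: "zB (s3 x) = - zB x" unfolding zB_def s3_def by (simp add: algebra_simps)

lemma prod_id: "(a::int)^2 - 2 * b^2 = P \<Longrightarrow> A^2 - 2 * B^2 = P \<Longrightarrow>
   (a * A - 2 * b * B) * (a * A + 2 * b * B) = P * (P + 2 * (b^2 + B^2))"
proof -
  assume h1: "a^2 - 2 * b^2 = P" and h2: "A^2 - 2 * B^2 = P"
  have ha: "a^2 = P + 2 * b^2" and hA: "A^2 = P + 2 * B^2" using h1 h2 by simp_all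
  have "(a * A - 2 * b * B) * (a * A + 2 * b * B) = a^2 * A^2 - 4 * b^2 * B^2" by Groebner_Basis.algebra
  also have "\<dots> = (P + 2 * b^2) * (P + 2 * B^2) - 4 * b^2 * B^2" by (simp only: ha hA)
  also have "\<dots> = P * (P + 2 * (b^2 + B^2))" by Groebner_Basis.algebra
  finally show ?thesis .
qed

lemma exists_AB:
  fixes p :: nat
  assumes p: "prime p" and p8: "p mod 8 = 1"
  shows "\<exists>x. zQ x > 0 \<and> zB x > 0 \<and> (zQ x)^2 - 2 * (zB x)^2 = int p"
proof -
  obtain x where x: "zN x = int p" using exists_norm_p[OF assms] by blast
  have p2: "p \<ge> 2" using prime_ge_2_nat[OF p] .
  have Qn: "zQ x \<ge> 0" unfolding zQ_def by simp
  have Q0: "zQ x > 0"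
  proof (rule ccontr)
    assume "\<not> zQ x > 0"
    hence "zQ x = 0" using Qn by simp
    hence "- 2 * (zB x)^2 = int p" using x unfolding zN_def by simp
    thus False using p2 zero_le_power2[of "zB x"] by linarith
  qed
  have B0: "zB x \<noteq> 0"
  proof
    assume "zB x = 0"
    hence sq: "int p = zQ x * zQ x" using x unfolding zN_def by (simp add: power2_eq_square)
    define m where "m = nat (zQ x)"
    have "int p = int (m * m)" using sq Qn unfolding m_def by simp
    hence pm: "p = m * m" by (simp only: of_nat_eq_iff)
    hence "m dvd p" by simp
    hence "m = 1 \<or> m = p" using p by (simp add: prime_nat_iff)
    thus False using pm p2 by auto
  qed
  show ?thesis
  proof (cases "zB x > 0")
    case True thus ?thesis using Q0 x unfolding zN_def by blast
  next
    case False
    hence "zB (s3 x) > 0" using B0 unfolding s3_B by simp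
    thus ?thesis using Q0 x unfolding zN_def by (intro exI[of _ "s3 x"]) (simp add: s3_Q s3_B)
  qed
qed

lemma from_x:
  fixes a b P :: int
  assumes P: "prime P" "P \<noteq> 2" and ab: "a^2 - 2 * b^2 = P" and AB: "(zQ x)^2 - 2 * (zB x)^2 = P"
    and a0: "a > 0" and A0: "zQ x > 0" and dv: "P dvd a * zQ x - 2 * b * zB x"
  shows "\<exists>y. zQ y = a \<and> zB y = b"
proof -
  obtain c d where cd: "c > 0" "c^2 - 2 * d^2 = 1" "a = c * zQ x + 2 * d * zB x" "b = c * zB x + d * zQ x"
    using relate[OF P ab AB a0 A0 dv] by blast
  obtain e f where ef: "c = e^2 + 2 * f^2" "d = 2 * e * f" using unit_square[OF cd(1,2)] by blast
  define v where "v = Z e f 0 (-f)"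
  have "zQ v = c" "zB v = d" unfolding v_def zQ_def zB_def ef by (simp_all add: power2_eq_square)
  hence "zQ (zmul v x) = a \<and> zB (zmul v x) = b" unfolding zQ_mul zB_mul using cd by (simp add: algebra_simps)
  thus ?thesis by blast
qed

lemma main_int:
  fixes p :: nat and a b :: int
  assumes p: "prime p" and p8: "p mod 8 = 1" and a0: "a > 0" and ab: "a^2 - 2 * b^2 = int p"
  shows "\<exists>y. zQ y = a \<and> zB y = b"
proof -
  obtain x where x: "zQ x > 0" "(zQ x)^2 - 2 * (zB x)^2 = int p" using exists_AB[OF p p8] by blast
  define P where "P = int p"
  have P: "prime P" using p unfolding P_def by (simp add: prime_nat_int_transfer)
  have P2: "P \<noteq> 2" using p8 unfolding P_def by auto
  have "(a * zQ x - 2 * b * zB x) * (a * zQ x + 2 * b * zB x) = P * (P + 2 * (b^2 + (zB x)^2))"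
    using prod_id[OF ab x(2)] unfolding P_def .
  hence "P dvd (a * zQ x - 2 * b * zB x) * (a * zQ x + 2 * b * zB x)" by simp
  hence "P dvd a * zQ x - 2 * b * zB x \<or> P dvd a * zQ x + 2 * b * zB x" using P prime_dvd_mult_iff by blast
  thus ?thesis
  proof
    assume "P dvd a * zQ x - 2 * b * zB x"
    thus ?thesis using from_x[OF P P2] ab x a0 unfolding P_def by blast
  next
    assume "P dvd a * zQ x + 2 * b * zB x"
    hence "P dvd a * zQ (s3 x) - 2 * b * zB (s3 x)" unfolding s3_Q s3_B by simp
    moreover have "(zQ (s3 x))^2 - 2 * (zB (s3 x))^2 = P" "zQ (s3 x) > 0" using x unfolding s3_Q s3_B P_def by simp_all
    ultimately show ?thesis using from_x[OF P P2] ab a0 unfolding P_def by blast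
  qed
qed

lemma zeta8_eq: "zeta8 = Complex (sqrt 2 / 2) (sqrt 2 / 2)"
proof -
  have "2 * of_real pi * \<i> / 8 = \<i> * complex_of_real (pi / 4)" by simp
  hence "zeta8 = cis (pi / 4)" unfolding zeta8_def by (simp add: cis_conv_exp)
  thus ?thesis by (simp add: cis.ctr cos_45 sin_45)
qed

lemma zeta8_sq: "zeta8^2 = \<i>"
  unfolding zeta8_eq by (simp add: power2_eq_square complex_eq_iff)

lemma zeta8_8: "zeta8^8 = 1"
proof -
  have "zeta8^8 = (zeta8^2)^4" by (simp flip: power_mult)
  thus ?thesis by (simp add: zeta8_sq)
qed

lemma zeta8_pow_mod: "zeta8^n = zeta8^(n mod 8)"
proof -
  have "zeta8^n = (zeta8^8)^(n div 8) * zeta8^(n mod 8)"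
    by (simp flip: power_mult power_add)
  thus ?thesis by (simp add: zeta8_8)
qed

definition sr :: real where "sr = sqrt 2 / 2"

lemma sr_sq: "sr * sr = 1/2" unfolding sr_def by simp

lemma zpows:
  "zeta8^0 = Complex 1 0" "zeta8^1 = Complex sr sr" "zeta8^2 = Complex 0 1" "zeta8^3 = Complex (-sr) sr"
  "zeta8^4 = Complex (-1) 0" "zeta8^5 = Complex (-sr) (-sr)" "zeta8^6 = Complex 0 (-1)" "zeta8^7 = Complex sr (-sr)"
  unfolding zeta8_eq sr_def[symmetric]
  by (simp_all add: complex_eq_iff eval_nat_numeral sr_sq algebra_simps one_complex.code)

lemma sum4: "(\<Sum>k<4. f k) = f 0 + f 1 + f 2 + f (3::nat)"
  by (simp add: eval_nat_numeral)


lemma zpow_gen: "zeta8^n = (let m = n mod 8 in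
   if m = 0 then Complex 1 0 else if m = 1 then Complex sr sr else if m = 2 then Complex 0 1
   else if m = 3 then Complex (-sr) sr else if m = 4 then Complex (-1) 0 else if m = 5 then Complex (-sr) (-sr)
   else if m = 6 then Complex 0 (-1) else Complex sr (-sr))"
proof -
  have "n mod 8 < 8" by simp
  hence "n mod 8 \<in> {0,1,2,3,4,5,6,7}" by auto
  thus ?thesis using zpows zeta8_pow_mod[of n] unfolding Let_def by auto
qed

lemma sr_sq2: "sr * (sr * 2) = 1" using sr_sq by simp

lemma Re_z: "Re zeta8 = sr" and Im_z: "Im zeta8 = sr" unfolding zeta8_eq sr_def by simp_all

lemma sig1: "sigma 1 c = Complex (of_int (c 0) + sr * (of_int (c 1) - of_int (c 3))) (of_int (c 2) + sr * (of_int (c 1) + of_int (c 3)))"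
  unfolding sigma_def sum4 by (simp add: zpow_gen Let_def complex_eq_iff algebra_simps Re_z Im_z sr_sq sr_sq2 del: power_one_right power_0)

lemma sig7: "sigma 7 c = cnj (sigma 1 c)"
  unfolding sig1 unfolding sigma_def sum4 by (simp add: zpow_gen Let_def complex_eq_iff algebra_simps Re_z Im_z sr_sq sr_sq2 del: power_one_right power_0)

lemma sig3: "sigma 3 c = Complex (of_int (c 0) + sr * (of_int (c 3) - of_int (c 1))) (- of_int (c 2) + sr * (of_int (c 1) + of_int (c 3)))"
  unfolding sigma_def sum4 by (simp add: zpow_gen Let_def complex_eq_iff algebra_simps Re_z Im_z sr_sq sr_sq2 del: power_one_right power_0)

lemma sig5: "sigma 5 c = cnj (sigma 3 c)"
  unfolding sig3 unfolding sigma_def sum4 by (simp add: zpow_gen Let_def complex_eq_iff algebra_simps Re_z Im_z sr_sq sr_sq2 del: power_one_right power_0)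


definition cf :: "z8 \<Rightarrow> nat \<Rightarrow> int" where
  "cf y = (\<lambda>k. if k = 0 then c0 y else if k = 1 then c1 y else if k = 2 then c2 y else c3 y)"

lemma cf_simps: "cf y 0 = c0 y" "cf y 1 = c1 y" "cf y 2 = c2 y" "cf y 3 = c3 y"
  unfolding cf_def by simp_all

lemma s2sq: "sqrt 2 * sqrt 2 = (2::real)" by simp

lemma sq_id1: assumes "(s::real) * s = 2" shows "(x0 + s / 2 * (x1 - x3))^2 + (x2 + s/2 * (x1 + x3))^2 = x0^2 + x1^2+x2^2+x3^2 + (x0*x1+x1*x2+x2*x3-x3*x0)*s"
proof -
  have "(x0 + s / 2 * (x1 - x3))^2 + (x2 + s/2 * (x1 + x3))^2 = x0^2 + x2^2 + s * (x0*x1+x1*x2+x2*x3-x3*x0) + (s*s) * (x1^2 + x3^2) / 2"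
    by (simp add: power2_eq_square field_simps)
  thus ?thesis using assms by simp
qed

lemma sq_id3: assumes "(s::real) * s = 2" shows "(x0 + s / 2 * (x3 - x1))^2 + (- x2 + s/2 * (x1 + x3))^2 = x0^2 + x1^2+x2^2+x3^2 - (x0*x1+x1*x2+x2*x3-x3*x0)*s"
proof -
  have "(x0 + s / 2 * (x3 - x1))^2 + (- x2 + s/2 * (x1 + x3))^2 = x0^2 + x2^2 - s * (x0*x1+x1*x2+x2*x3-x3*x0) + (s*s) * (x1^2 + x3^2) / 2"
    by (simp add: power2_eq_square field_simps)
  thus ?thesis using assms by simp
qed

lemma norm1: "(Re (sigma 1 (cf y)))^2 + (Im (sigma 1 (cf y)))^2 = of_int (zQ y) + of_int (zB y) * sqrt 2"
  unfolding sig1 cf_simps zQ_def zB_def sr_def complex.sel of_int_add of_int_mult of_int_power of_int_diff of_int_minus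
  by (rule sq_id1[OF s2sq])

lemma norm3: "(Re (sigma 3 (cf y)))^2 + (Im (sigma 3 (cf y)))^2 = of_int (zQ y) - of_int (zB y) * sqrt 2"
  unfolding sig3 cf_simps zQ_def zB_def sr_def complex.sel of_int_add of_int_mult of_int_power of_int_diff of_int_minus
  by (rule sq_id3[OF s2sq])

lemma prod17: "sigma 1 (cf y) * sigma 7 (cf y) = complex_of_real (of_int (zQ y) + of_int (zB y) * sqrt 2)"
  unfolding sig7 complex_mult_cnj norm1 ..

lemma prod35: "sigma 3 (cf y) * sigma 5 (cf y) = complex_of_real (of_int (zQ y) - of_int (zB y) * sqrt 2)"
  unfolding sig5 complex_mult_cnj norm3 ..

lemma emb: "emb_norm2 (cf y) = 4 * of_int (zQ y)"
proof -
  have "emb_norm2 (cf y) = (cmod (sigma 1 (cf y)))^2 + (cmod (sigma 3 (cf y)))^2 + (cmod (sigma 5 (cf y)))^2 + (cmod (sigma 7 (cf y)))^2"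
    unfolding emb_norm2_def by simp
  also have "\<dots> = 2 * ((Re (sigma 1 (cf y)))^2 + (Im (sigma 1 (cf y)))^2) + 2 * ((Re (sigma 3 (cf y)))^2 + (Im (sigma 3 (cf y)))^2)"
    unfolding sig5 sig7 complex_mod_cnj cmod_power2 by simp
  also have "\<dots> = 4 * of_int (zQ y)" unfolding norm1 norm3 by simp
  finally show ?thesis .
qed

theorem lemma4:
  fixes p :: nat
  assumes "prime p" and "p mod 8 = 1"
  shows "(\<exists>a b :: int. a > 0 \<and> b > 0 \<and>
            real p = (of_int a + of_int b * sqrt 2) * (of_int a - of_int b * sqrt 2))
       \<and> (\<forall>a b :: int. a > 0 \<longrightarrow> b > 0 \<longrightarrow>
            real p = (of_int a + of_int b * sqrt 2) * (of_int a - of_int b * sqrt 2) \<longrightarrow>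
            (\<exists>c :: nat \<Rightarrow> int.
               sigma 1 c * sigma 7 c = complex_of_real (a + b * sqrt 2) \<and>
               sigma 3 c * sigma 5 c = complex_of_real (a - b * sqrt 2) \<and>
               complex_of_real (emb_norm2 c) = 2 * (sigma 1 c * sigma 7 c) + 2 * (sigma 3 c * sigma 5 c) \<and>
               2 * (sigma 1 c * sigma 7 c) + 2 * (sigma 3 c * sigma 5 c) = 4 * of_int a))"
proof
  have rid: "(of_int a + of_int b * sqrt 2) * (of_int a - of_int b * sqrt 2) = (of_int (a^2 - 2 * b^2) :: real)"
    for a b :: int
  proof -
    have "(of_int a + of_int b * sqrt 2) * (of_int a - of_int b * sqrt 2) = (of_int a)^2 - (of_int b)^2 * (sqrt 2 * sqrt 2 :: real)"
      by (simp add: power2_eq_square algebra_simps)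
    thus ?thesis by simp
  qed
  obtain x where x: "zQ x > 0" "zB x > 0" "(zQ x)^2 - 2 * (zB x)^2 = int p" using exists_AB[OF assms] by blast
  show "\<exists>a b :: int. a > 0 \<and> b > 0 \<and>
            real p = (of_int a + of_int b * sqrt 2) * (of_int a - of_int b * sqrt 2)"
    using x rid[of "zQ x" "zB x"] by (intro exI[of _ "zQ x"] exI[of _ "zB x"]) simp
  show "\<forall>a b :: int. a > 0 \<longrightarrow> b > 0 \<longrightarrow>
            real p = (of_int a + of_int b * sqrt 2) * (of_int a - of_int b * sqrt 2) \<longrightarrow>
            (\<exists>c :: nat \<Rightarrow> int.
               sigma 1 c * sigma 7 c = complex_of_real (a + b * sqrt 2) \<and>
               sigma 3 c * sigma 5 c = complex_of_real (a - b * sqrt 2) \<and>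
               complex_of_real (emb_norm2 c) = 2 * (sigma 1 c * sigma 7 c) + 2 * (sigma 3 c * sigma 5 c) \<and>
               2 * (sigma 1 c * sigma 7 c) + 2 * (sigma 3 c * sigma 5 c) = 4 * of_int a)"
  proof (intro allI impI)
    fix a b :: int
    assume a0: "a > 0" and b0: "b > 0" and rp: "real p = (of_int a + of_int b * sqrt 2) * (of_int a - of_int b * sqrt 2)"
    have "real_of_int (int p) = real_of_int (a^2 - 2 * b^2)" using rp rid[of a b] by simp
    hence ab: "a^2 - 2 * b^2 = int p" by (simp only: of_int_eq_iff)
    obtain y where y: "zQ y = a" "zB y = b" using main_int[OF assms a0 ab] by blast
    show "\<exists>c :: nat \<Rightarrow> int.
               sigma 1 c * sigma 7 c = complex_of_real (a + b * sqrt 2) \<and>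
               sigma 3 c * sigma 5 c = complex_of_real (a - b * sqrt 2) \<and>
               complex_of_real (emb_norm2 c) = 2 * (sigma 1 c * sigma 7 c) + 2 * (sigma 3 c * sigma 5 c) \<and>
               2 * (sigma 1 c * sigma 7 c) + 2 * (sigma 3 c * sigma 5 c) = 4 * of_int a"
    proof (intro exI[of _ "cf y"] conjI)
      show "sigma 1 (cf y) * sigma 7 (cf y) = complex_of_real (a + b * sqrt 2)" using prod17 y by simp
      show "sigma 3 (cf y) * sigma 5 (cf y) = complex_of_real (a - b * sqrt 2)" using prod35 y by simp
      show "complex_of_real (emb_norm2 (cf y)) = 2 * (sigma 1 (cf y) * sigma 7 (cf y)) + 2 * (sigma 3 (cf y) * sigma 5 (cf y))"
        unfolding emb prod17 prod35 by (simp add: algebra_simps)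
      show "2 * (sigma 1 (cf y) * sigma 7 (cf y)) + 2 * (sigma 3 (cf y) * sigma 5 (cf y)) = 4 * of_int a"
        unfolding prod17 prod35 y by (simp add: algebra_simps)
    qed
  qed
qed

end
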